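(* Let $I\subseteq\mathbb{R}$ be an open interval, $f:I\to\mathbb{R}$ continuous, and let $X$ be a random variable on a probability space $(\Omega,\Sigma,\mu)$ such that (i) the range of $X$ is contained in $I$; (ii) the expectations $E(X)$ and $E(f(X))$ exist and are finite; (iii) $E(X)$ is a point of convexity of $f$ relative to $I$. Then $$f(E(X))\le\int_\Omega f(X(\omega))\,d\mu(\omega).$$
   Context: A point $p\in I$ is a point of convexity of $f$ relative to $I$ if $f(p)\le\sum_{k=1}^n\lambda_k f(x_k)$ for every finite family of points $x_1,\dots,x_n\in I$ and positive weights $\lambda_1,\dots,\lambda_n$ with $\sum_k\lambda_k=1$ and $\sum_k\lambda_k x_k=p$. *)

theory Defs
  imports "HOL-Probability.Probability"
begin

definition convexity_point :: "(real \<Rightarrow> real) \<Rightarrow> real set \<Rightarrow> real \<Rightarrow> bool" where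
  "convexity_point f I p \<longleftrightarrow> p \<in> I \<and>
     (\<forall>(n::nat) (x::nat \<Rightarrow> real) (w::nat \<Rightarrow> real).
        (\<forall>k<n. x k \<in> I) \<and> (\<forall>k<n. w k > 0) \<and> (\<Sum>k<n. w k) = 1 \<and>
        (\<Sum>k<n. w k * x k) = p
        \<longrightarrow> f p \<le> (\<Sum>k<n. w k * f (x k)))"

end

theory Submission
  imports Defs
begin

lemma two_point:
  assumes c: "convexity_point f I p" and "a \<in> I" "b \<in> I" "a < p" "p < b"
  shows "(f p - f a)/(p-a) \<le> (f b - f p)/(b-p)"
proof -
  define l where "l = (b-p)/(b-a)"
  have l0: "l > 0" "1 - l > 0" using assms by (auto simp: l_def field_simps)
  have lb: "l*(b-a) = b-p" using assms unfolding l_def by simp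
  have "l*a + (1-l)*b = b - l*(b-a)" by (simp add: algebra_simps)
  hence bar: "l*a + (1-l)*b = p" using lb by simp
  let ?x = "\<lambda>k::nat. if k = 0 then a else b"
  let ?w = "\<lambda>k::nat. if k = 0 then l else 1 - l"
  have "f p \<le> (\<Sum>k<2. ?w k * f (?x k))"
    using c assms l0 bar unfolding convexity_point_def
    apply (elim conjE)
    apply (drule spec[of _ 2], drule spec[of _ ?x], drule spec[of _ ?w])
    by (auto simp: numeral_2_eq_2 lessThan_Suc less_Suc_eq)
  hence h: "f p \<le> l * f a + (1-l) * f b" by (simp add: numeral_2_eq_2)
  hence "f p * (b-a) \<le> (l * f a + (1-l) * f b) * (b-a)"
    using assms by (intro mult_right_mono) auto
  also have "\<dots> = (l*(b-a)) * f a + ((b-a) - l*(b-a)) * f b" by (simp add: algebra_simps)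
  also have "\<dots> = (b-p) * f a + (p-a) * f b" using lb by simp
  finally have "f p * (b-a) \<le> (b-p) * f a + (p-a) * f b" .
  thus ?thesis using assms by (simp add: field_simps)
qed

theorem theorem4:
  fixes M :: "'a measure" and I :: "real set" and f :: "real \<Rightarrow> real" and X :: "'a \<Rightarrow> real"
  assumes "prob_space M"
    and "open I" and "is_interval I" and "I \<noteq> {}"
    and "continuous_on I f"
    and "X \<in> borel_measurable M"
    and "\<And>\<omega>. \<omega> \<in> space M \<Longrightarrow> X \<omega> \<in> I"
    and "integrable M X"
    and "integrable M (\<lambda>\<omega>. f (X \<omega>))"
    and "convexity_point f I (prob_space.expectation M X)"
  shows "f (prob_space.expectation M X) \<le> (\<integral>\<omega>. f (X \<omega>) \<partial>M)"
proof -
  interpret prob_space M by fact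
  define p where "p = expectation X"
  have c: "convexity_point f I p" using assms(10) p_def by simp
  hence pI: "p \<in> I" by (simp add: convexity_point_def)
  obtain e where e: "e > 0" "ball p e \<subseteq> I" using assms(2) pI open_contains_ball by blast
  have lo: "p - e/2 \<in> I" "p + e/2 \<in> I" using e by (auto simp: dist_real_def intro!: subsetD[OF e(2)])
  define S where "S = {a\<in>I. a < p}"
  define L where "L = (\<lambda>a. (f p - f a)/(p-a))"
  define m where "m = (SUP a\<in>S. L a)"
  have Sne: "S \<noteq> {}" using lo e unfolding S_def by auto
  have R: "L a \<le> (f b - f p)/(b-p)" if "a \<in> S" "b \<in> I" "p < b" for a b
    using two_point[OF c] that unfolding S_def L_def by auto
  have bdd: "bdd_above (L ` S)"
    using R[OF _ lo(2)] e by (auto simp: bdd_above_def)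
  have sup: "f p + m*(x-p) \<le> f x" if "x \<in> I" for x
  proof (cases "x < p")
    case True
    hence "x \<in> S" using that S_def by auto
    hence "L x \<le> m" unfolding m_def using bdd by (intro cSUP_upper)
    hence "L x * (p - x) \<le> m * (p - x)" using True by (intro mult_right_mono) auto
    moreover have "L x * (p - x) = f p - f x" using True by (simp add: L_def)
    ultimately show ?thesis by (simp add: algebra_simps)
  next
    case False
    show ?thesis
    proof (cases "x = p")
      case True thus ?thesis by simp
    next
      case False2: False
      hence xp: "p < x" using False by auto
      have "m \<le> (f x - f p)/(x-p)" unfolding m_def using Sne R that xp by (intro cSUP_least) auto
      hence "m * (x-p) \<le> (f x - f p)/(x-p) * (x-p)" using xp by (intro mult_right_mono) auto
      thus ?thesis using xp by simp
    qed
  qed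
  have "(\<integral>\<omega>. f p + m*(X \<omega> - p) \<partial>M) \<le> (\<integral>\<omega>. f (X \<omega>) \<partial>M)"
    using assms(7-9) sup by (intro integral_mono) auto
  moreover have "(\<integral>\<omega>. f p + m*(X \<omega> - p) \<partial>M) = f p"
  proof -
    have "(\<integral>\<omega>. f p + m*(X \<omega> - p) \<partial>M) = (\<integral>\<omega>. f p - m*p + m * X \<omega> \<partial>M)"
      by (simp add: algebra_simps)
    also have "\<dots> = (f p - m*p) + m * expectation X"
      using assms(8) by (simp add: prob_space)
    finally show ?thesis by (simp add: p_def)
  qed
  ultimately show ?thesis by (simp add: p_def)
qed

end
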